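(* Let $c\ge 3$ and let $G$ be a $c$-edge-colored multigraph (without loops, and with no two parallel edges of the same color) with $n$ vertices, such that $|E_{uv}|\le c-1$ for every pair of distinct vertices $u,v$. If $\delta_i(x)\ge n/2$ for every $x\in V(G)$ and every $i\in\{1,\ldots,c\}$, then $G$ has a properly colored hamiltonian cycle.
   Context: A $c$-edge-colored multigraph is a finite multigraph without loops (parallel edges allowed) together with a map $\phi:E(G)\to\{1,\ldots,c\}$. For $u,v\in V(G)$, $E_{uv}$ is the set of edges with end vertices $u$ and $v$. For $x\in V(G)$ and a color $i$, $\delta_i(x)$ is the number of vertices joined to $x$ by an edge of color $i$. A properly colored (PC) hamiltonian cycle is a cyclic sequence $(x_1,f_1,x_2,f_2,\ldots,x_n,f_n,x_1)$ containing every vertex exactly once, with $f_i\in E_{x_ix_{i+1}}$ (indices mod $n$), such that any two consecutive edges, including $f_n$ and $f_1$, have different colors. *)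

theory Defs
  imports Main
begin

text \<open>A c-edge-colored multigraph without loops and without two parallel edges of
the same colour is determined by its finite vertex set V and, for each pair u v,
the set col u v of colours of the edges joining u and v (so |E_uv| = card (col u v)).\<close>

definition ec_multigraph :: "nat \<Rightarrow> 'a set \<Rightarrow> ('a \<Rightarrow> 'a \<Rightarrow> nat set) \<Rightarrow> bool" where
  "ec_multigraph c V col \<longleftrightarrow> finite V
     \<and> (\<forall>u v. col u v = col v u)
     \<and> (\<forall>u. col u u = {})
     \<and> (\<forall>u v. col u v \<noteq> {} \<longrightarrow> u \<in> V \<and> v \<in> V)
     \<and> (\<forall>u v. col u v \<subseteq> {1..c})"

definition col_degree :: "'a set \<Rightarrow> ('a \<Rightarrow> 'a \<Rightarrow> nat set) \<Rightarrow> nat \<Rightarrow> 'a \<Rightarrow> nat" where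
  "col_degree V col i x = card {y \<in> V. i \<in> col x y}"

text \<open>A properly coloured hamiltonian cycle (x_1,f_1,...,x_n,f_n,x_1): the vertices
are listed in xs (each vertex of V exactly once), and fs ! k is the colour of the
edge f_k joining xs!k and xs!((k+1) mod n); consecutive edges (cyclically) have
different colours.\<close>
definition PC_ham_cycle :: "'a set \<Rightarrow> ('a \<Rightarrow> 'a \<Rightarrow> nat set) \<Rightarrow> 'a list \<Rightarrow> nat list \<Rightarrow> bool" where
  "PC_ham_cycle V col xs fs \<longleftrightarrow>
     distinct xs \<and> set xs = V \<and> length fs = length xs
     \<and> (\<forall>k < length xs. fs ! k \<in> col (xs ! k) (xs ! ((k + 1) mod length xs)))
     \<and> (\<forall>k < length xs. fs ! k \<noteq> fs ! ((k + 1) mod length xs))"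

definition has_PC_ham_cycle :: "'a set \<Rightarrow> ('a \<Rightarrow> 'a \<Rightarrow> nat set) \<Rightarrow> bool" where
  "has_PC_ham_cycle V col \<longleftrightarrow> (\<exists>xs fs. PC_ham_cycle V col xs fs)"

end

theory Submission imports Defs begin

fun pe :: "('a \<Rightarrow> 'a \<Rightarrow> bool) \<Rightarrow> 'a list \<Rightarrow> nat" where
  "pe E (x # y # zs) = (if E x y then 1 else 0) + pe E (y # zs)"
| "pe E _ = 0"

definition cyc :: "('a \<Rightarrow> 'a \<Rightarrow> bool) \<Rightarrow> 'a list \<Rightarrow> nat" where
  "cyc E xs = pe E xs + (if xs \<noteq> [] \<and> E (last xs) (hd xs) then 1 else 0)"

lemma pe_append:
  "as \<noteq> [] \<Longrightarrow> bs \<noteq> [] \<Longrightarrow>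
   pe E (as @ bs) = pe E as + (if E (last as) (hd bs) then 1 else 0) + pe E bs"
proof (induction as)
  case Nil then show ?case by simp
next
  case (Cons a as)
  show ?case
  proof (cases as)
    case Nil then show ?thesis using Cons by (cases bs) auto
  next
    case (Cons b cs) then show ?thesis using Cons.IH Cons.prems by simp
  qed
qed

lemma pe_rev:
  assumes "\<forall>x y. E x y = E y x"
  shows "pe E (rev xs) = pe E xs"
proof (induction xs)
  case Nil then show ?case by simp
next
  case (Cons x xs)
  show ?case
  proof (cases xs)
    case Nil then show ?thesis by simp
  next
    case (Cons y ys)
    have "pe E (rev (x # xs)) = pe E (rev xs @ [x])" by simp
    also have "\<dots> = pe E (rev xs) + (if E (last (rev xs)) x then 1 else 0)"
      using Cons by (subst pe_append) auto
    also have "\<dots> = pe E (x # xs)" using Cons.IH Cons assms by (simp add: last_rev)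
    finally show ?thesis .
  qed
qed

lemma cyc_rotate1: "cyc E (rotate1 xs) = cyc E xs"
proof (cases xs)
  case Nil then show ?thesis by simp
next
  case (Cons x ys)
  show ?thesis
  proof (cases ys)
    case Nil then show ?thesis using Cons by simp
  next
    case (Cons y zs)
    have "pe E (ys @ [x]) = pe E ys + (if E (last ys) x then 1 else 0)"
      using Cons pe_append[of ys "[x]" E] by simp
    moreover have "pe E (x # ys) = (if E x (hd ys) then 1 else 0) + pe E ys"
      using Cons by simp
    ultimately show ?thesis using \<open>xs = x # ys\<close> Cons
      by (simp add: cyc_def)
  qed
qed

lemma cyc_rotate: "cyc E (rotate m xs) = cyc E xs"
  by (induction m) (simp_all add: cyc_rotate1)

lemma pe_le: "pe E xs \<le> length xs - 1"
  by (induction E xs rule: pe.induct) auto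

lemma cyc_le: "cyc E xs \<le> length xs"
  using pe_le[of E xs] by (cases xs) (auto simp: cyc_def)

lemma ore_step:
  assumes sym: "\<forall>x y. E x y = E y x" and irr: "\<forall>x. \<not> E x x"
    and deg: "\<forall>x\<in>V. card V + 1 \<le> 2 * card {y\<in>V. E x y}"
    and fin: "finite V"
    and dist: "distinct xs" and setx: "set xs = V" and len: "3 \<le> length xs"
    and nl: "\<not> E (last xs) (hd xs)"
  shows "\<exists>ys. distinct ys \<and> set ys = V \<and> cyc E xs < cyc E ys"
proof -
  define n where "n = length xs"
  have cV: "card V = n" using distinct_card[OF dist] setx n_def by simp
  have hd: "hd xs = xs ! 0" using len by (cases xs) auto
  have ne: "xs \<noteq> []" using len by auto
  have lst: "last xs = xs ! (n - 1)" using ne n_def by (simp add: last_conv_nth)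
  define A where "A = {i. i \<le> n - 2 \<and> E (xs!0) (xs!(i+1))}"
  define B where "B = {i. i \<le> n - 2 \<and> E (xs!(n-1)) (xs!i)}"
  have finA: "finite A" unfolding A_def by auto
  have finB: "finite B" unfolding B_def by auto
  have x0V: "xs!0 \<in> V" using setx len by (auto intro!: nth_mem)
  have xnV: "xs!(n-1) \<in> V" using setx len n_def by (auto intro!: nth_mem)
  have "{y\<in>V. E (xs!0) y} \<subseteq> (\<lambda>i. xs!(i+1)) ` A"
  proof
    fix y assume "y \<in> {y\<in>V. E (xs!0) y}"
    then have y: "y \<in> set xs" "E (xs!0) y" using setx by auto
    then obtain j where j: "j < n" "y = xs ! j" by (auto simp: in_set_conv_nth n_def)
    have "j \<noteq> 0" using j y irr by (metis)
    then have "j - 1 \<in> A" using j y unfolding A_def by auto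
    then show "y \<in> (\<lambda>i. xs!(i+1)) ` A" using j \<open>j \<noteq> 0\<close>
      by (intro image_eqI[of _ _ "j - 1"]) auto
  qed
  then have cA: "card {y\<in>V. E (xs!0) y} \<le> card A"
    using card_mono[OF finite_imageI[OF finA]] card_image_le[OF finA] le_trans by blast
  have "{y\<in>V. E (xs!(n-1)) y} \<subseteq> (\<lambda>i. xs!i) ` B"
  proof
    fix y assume "y \<in> {y\<in>V. E (xs!(n-1)) y}"
    then have y: "y \<in> set xs" "E (xs!(n-1)) y" using setx by auto
    then obtain j where j: "j < n" "y = xs ! j" by (auto simp: in_set_conv_nth n_def)
    have "j \<noteq> n - 1" using j y irr by (metis)
    then have "j \<in> B" using j y unfolding B_def by auto
    then show "y \<in> (\<lambda>i. xs!i) ` B" using j by auto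
  qed
  then have cB: "card {y\<in>V. E (xs!(n-1)) y} \<le> card B"
    using card_mono[OF finite_imageI[OF finB]] card_image_le[OF finB] le_trans by blast
  have "A \<inter> B \<noteq> {}"
  proof
    assume disj: "A \<inter> B = {}"
    have "A \<union> B \<subseteq> {..n-2}" unfolding A_def B_def by auto
    then have "card (A \<union> B) \<le> card {..n-2}" by (intro card_mono) auto
    then have "card (A \<union> B) \<le> n - 1" using len n_def by simp
    moreover have "card (A \<union> B) = card A + card B" using card_Un_disjoint[OF finA finB disj] .
    moreover have "n + 1 \<le> 2 * card A" using deg x0V cA cV by fastforce
    moreover have "n + 1 \<le> 2 * card B" using deg xnV cB cV by fastforce
    ultimately show False by linarith
  qed
  then obtain i where iA: "i \<in> A" and iB: "i \<in> B" by blast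
  have iE1: "E (xs!0) (xs!(i+1))" and iE2: "E (xs!(n-1)) (xs!i)" and ile: "i \<le> n - 2"
    using iA iB unfolding A_def B_def by auto
  define as where "as = take (Suc i) xs"
  define bs where "bs = drop (Suc i) xs"
  have xsab: "xs = as @ bs" unfolding as_def bs_def by simp
  have asne: "as \<noteq> []" and bsne: "bs \<noteq> []" using ile len n_def unfolding as_def bs_def by auto
  have las: "last as = xs ! i"
  proof -
    have "last as = as ! (length as - 1)" using asne by (simp add: last_conv_nth)
    moreover have "length as = Suc i" using ile len n_def unfolding as_def by simp
    ultimately show ?thesis unfolding as_def by simp
  qed
  have hbs: "hd bs = xs ! (i+1)" using ile len n_def unfolding bs_def
    by (simp add: hd_drop_conv_nth)
  have lbs: "last bs = xs ! (n-1)" using ile len n_def lst unfolding bs_def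
    by simp
  have has: "hd as = xs ! 0" using asne unfolding as_def by (cases xs) auto
  define ys where "ys = as @ rev bs"
  have "distinct ys" using dist unfolding ys_def xsab by auto
  moreover have "set ys = V" using setx unfolding ys_def xsab by auto
  moreover have "cyc E xs < cyc E ys"
  proof -
    have "cyc E xs = pe E as + (if E (xs!i) (xs!(i+1)) then 1 else 0) + pe E bs"
      unfolding cyc_def using nl xsab pe_append[OF asne bsne, of E] las hbs by simp
    moreover have "cyc E ys = pe E as + 1 + pe E bs + 1"
    proof -
      have "pe E ys = pe E as + (if E (last as) (hd (rev bs)) then 1 else 0) + pe E (rev bs)"
        unfolding ys_def using pe_append[of as "rev bs" E] asne bsne by simp
      also have "\<dots> = pe E as + 1 + pe E bs"
        using las lbs iE2 sym pe_rev[OF sym] bsne by (simp add: hd_rev)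
      finally have "pe E ys = pe E as + 1 + pe E bs" .
      moreover have "last ys = xs ! (i+1)" "hd ys = xs ! 0"
        unfolding ys_def using asne bsne hbs has by (simp_all add: last_rev)
      ultimately show ?thesis unfolding cyc_def using iE1 sym ys_def asne by auto
    qed
    ultimately show ?thesis by simp
  qed
  ultimately show ?thesis by blast
qed

lemma dirac_path:
  assumes sym: "\<forall>x y. E x y = E y x" and irr: "\<forall>x. \<not> E x x"
    and deg: "\<forall>x\<in>V. card V + 1 \<le> 2 * card {y\<in>V. E x y}"
    and fin: "finite V" and three: "3 \<le> card V"
  shows "\<exists>xs. distinct xs \<and> set xs = V \<and> (\<forall>k. Suc k < length xs \<longrightarrow> E (xs!k) (xs!Suc k))"
proof -
  define P where "P xs \<longleftrightarrow> distinct xs \<and> set xs = V" for xs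
  obtain xs0 where xs0: "set xs0 = V" "distinct xs0" using finite_distinct_list[OF fin] by blast
  have "P xs0" unfolding P_def using xs0 by blast
  moreover have "\<forall>y. P y \<longrightarrow> cyc E y < card V + 1"
  proof (intro allI impI)
    fix zs assume "P zs"
    then have "distinct zs" "set zs = V" unfolding P_def by auto
    then show "cyc E zs < card V + 1" using cyc_le[of E zs] distinct_card[of zs] by simp
  qed
  note ex_has_greatest_nat[where P=P and k="xs0" and f="cyc E" and b="card V + 1", OF \<open>P xs0\<close> this]
  then obtain xs where mm: "P xs \<and> (\<forall>y. P y \<longrightarrow> cyc E y \<le> cyc E xs)" ..
  define m where "m = cyc E xs"
  have xs: "distinct xs" "set xs = V" "cyc E xs = m" using mm unfolding P_def m_def by auto
  have mmax: "\<forall>zs. distinct zs \<and> set zs = V \<longrightarrow> cyc E zs \<le> m" using mm unfolding P_def m_def by auto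
  have len: "length xs = card V" using distinct_card[OF xs(1)] xs(2) by simp
  have "E (xs!k) (xs!Suc k)" if k: "Suc k < length xs" for k
  proof -
    define ys where "ys = rotate (Suc k) xs"
    have ys: "distinct ys" "set ys = V" unfolding ys_def using xs
      by simp_all
    have "cyc E ys = cyc E xs" unfolding ys_def by (rule cyc_rotate)
    then have ys3: "cyc E ys = m" using xs by simp
    note ys = ys ys3
    have "E (last ys) (hd ys)"
    proof (rule ccontr)
      assume "\<not> E (last ys) (hd ys)"
      moreover have "3 \<le> length ys" using len three unfolding ys_def by simp
      from ore_step[OF sym irr deg fin ys(1) ys(2) this \<open>\<not> E (last ys) (hd ys)\<close>]
      obtain zs where "distinct zs" "set zs = V" "cyc E ys < cyc E zs"
        by blast
      then have "cyc E zs \<le> m" using mmax by blast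
      then show False using ys(3) \<open>cyc E ys < cyc E zs\<close> by simp
    qed
    moreover have "ys = drop (Suc k) xs @ take (Suc k) xs"
      unfolding ys_def using k by (simp add: rotate_drop_take)
    moreover have "hd (drop (Suc k) xs) = xs ! Suc k" using k by (simp add: hd_drop_conv_nth)
    moreover have "last (take (Suc k) xs) = xs ! k"
    proof -
      have ne: "take (Suc k) xs \<noteq> []" using k by auto
      have "last (take (Suc k) xs) = take (Suc k) xs ! (length (take (Suc k) xs) - 1)"
        using ne by (simp add: last_conv_nth)
      then show ?thesis using k by simp
    qed
    moreover have "drop (Suc k) xs \<noteq> []" "take (Suc k) xs \<noteq> []" using k by auto
    ultimately have "last ys = xs ! k" "hd ys = xs ! Suc k" by simp_all
    with \<open>E (last ys) (hd ys)\<close> sym show ?thesis by metis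
  qed
  then show ?thesis using xs by blast
qed

primrec gcol :: "(nat \<Rightarrow> nat set) \<Rightarrow> nat \<Rightarrow> nat \<Rightarrow> nat" where
  "gcol L g 0 = g"
| "gcol L g (Suc k) = (SOME b. b \<in> L (Suc k) \<and> b \<noteq> gcol L g k)"

lemma color_cycle:
  fixes L :: "nat \<Rightarrow> nat set" and n :: nat
  assumes n2: "2 \<le> n" and g0: "\<gamma> \<in> L 0" and gl: "\<gamma> \<notin> L (n - 1)"
    and cL: "\<forall>k. 1 \<le> k \<and> k < n \<longrightarrow> 2 \<le> card (L k)"
  shows "\<exists>f. \<forall>k<n. f k \<in> L k \<and> f k \<noteq> f ((k + 1) mod n)"
proof -
  define f where "f = gcol L \<gamma>"
  have step: "f (Suc k) \<in> L (Suc k) \<and> f (Suc k) \<noteq> f k" if "Suc k < n" for k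
  proof -
    have c2: "2 \<le> card (L (Suc k))" using cL that by auto
    have "card (L (Suc k) - {f k}) \<ge> 1"
      using c2 card_Diff_singleton_if[of "L (Suc k)" "f k"] by (auto split: if_splits)
    then have "L (Suc k) - {f k} \<noteq> {}" by (metis card.empty not_one_le_zero)
    then have "\<exists>b. b \<in> L (Suc k) \<and> b \<noteq> f k" by auto
    then show ?thesis unfolding f_def gcol.simps by (rule someI_ex)
  qed
  have mem: "f k \<in> L k" if "k < n" for k
  proof (cases k)
    case 0 then show ?thesis using g0 unfolding f_def by simp
  next
    case (Suc k') then show ?thesis using step[of k'] that by auto
  qed
  have "\<forall>k<n. f k \<in> L k \<and> f k \<noteq> f ((k + 1) mod n)"
  proof (intro allI impI conjI)
    fix k assume k: "k < n"
    show "f k \<in> L k" using mem k .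
    show "f k \<noteq> f ((k + 1) mod n)"
    proof (cases "k + 1 < n")
      case True then show ?thesis using step[of k] by auto
    next
      case False
      then have "k = n - 1" using k by auto
      moreover have "k + 1 = n" using k False by simp
      then have "(k + 1) mod n = 0" by simp
      moreover have "f 0 = \<gamma>" unfolding f_def by simp
      ultimately show ?thesis using mem[OF k] gl by auto
    qed
  qed
  then show ?thesis by blast
qed

lemma arith_aux:
  fixes d a k :: nat
  assumes "(d + 2) * (a + k + 1) \<le> 2 * ((d + 1) * a + k)" "2 * a \<le> a + k + 1" "1 \<le> d"
  shows False
proof -
  have e1: "(d + 2) * (a + k + 1) = d * a + d * k + d + 2 * a + 2 * k + 2"
    by (simp add: distrib_left distrib_right)
  have e2: "2 * ((d + 1) * a + k) = 2 * (d * a) + 2 * a + 2 * k"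
    by (simp add: distrib_left distrib_right)
  have "a \<le> k + 1" using assms(2) by simp
  then have "d * a \<le> d * (k + 1)" by (rule mult_le_mono2)
  then have e3: "d * a \<le> d * k + d" by (simp add: distrib_left)
  show False using assms(1) e1 e2 e3 by linarith
qed

lemma deg_H:
  assumes c3: "c \<ge> 3" and mg: "ec_multigraph c V col"
    and le: "\<forall>u\<in>V. \<forall>v\<in>V. u \<noteq> v \<longrightarrow> card (col u v) \<le> c - 1"
    and dg: "\<forall>x\<in>V. \<forall>i\<in>{1..c}. 2 * col_degree V col i x \<ge> card V"
    and x: "x \<in> V"
  shows "card V + 1 \<le> 2 * card {y\<in>V. 2 \<le> card (col x y)}"
proof -
  have fin: "finite V" and sub: "\<And>u v. col u v \<subseteq> {1..c}" and cxx: "col x x = {}"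
    using mg unfolding ec_multigraph_def by auto
  define S where "S = (\<Sum>y\<in>V. card (col x y))"
  have cd: "col_degree V col i x = (\<Sum>y\<in>V. if i \<in> col x y then 1 else 0)" for i
    unfolding col_degree_def using fin by (simp add: sum.inter_filter[symmetric])
  have cc: "card (col x y) = (\<Sum>i\<in>{1..c}. if i \<in> col x y then 1 else 0)" for y
  proof -
    have "col x y = {i\<in>{1..c}. i \<in> col x y}" using sub[of x y] by blast
    then have "card (col x y) = card {i\<in>{1..c}. i \<in> col x y}" by simp
    also have "\<dots> = (\<Sum>i\<in>{1..c}. if i \<in> col x y then 1 else 0)"
      by (simp add: sum.inter_filter[symmetric])
    finally show ?thesis .
  qed
  have sumS: "(\<Sum>i\<in>{1..c}. col_degree V col i x) = S"
    unfolding S_def cd cc by (rule sum.swap)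
  have "(\<Sum>i\<in>{1..c}. card V) \<le> (\<Sum>i\<in>{1..c}. 2 * col_degree V col i x)"
    using dg x by (intro sum_mono) auto
  moreover have "(\<Sum>i\<in>{1..c}. 2 * col_degree V col i x) = 2 * (\<Sum>i\<in>{1..c}. col_degree V col i x)"
    by (simp add: sum_distrib_left)
  ultimately have h1: "c * card V \<le> 2 * S" using sumS by simp
  define N where "N = {y\<in>V. 2 \<le> card (col x y)}"
  have finN: "finite N" using fin unfolding N_def by auto
  have xN: "x \<notin> N" using cxx unfolding N_def by auto
  have NV: "N \<subseteq> V - {x}" using xN unfolding N_def by auto
  have "S = (\<Sum>y\<in>V - {x}. card (col x y))"
    unfolding S_def using sum.remove[OF fin x, of "\<lambda>y. card (col x y)"] cxx by simp
  also have "\<dots> \<le> (\<Sum>y\<in>V - {x}. if y \<in> N then c - 1 else 1)"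
  proof (rule sum_mono)
    fix y assume y: "y \<in> V - {x}"
    show "card (col x y) \<le> (if y \<in> N then c - 1 else 1)"
      using le x y unfolding N_def by auto
  qed
  also have "\<dots> = (\<Sum>y\<in>N. c - 1) + (\<Sum>y\<in>(V - {x}) - N. 1)"
  proof -
    have "(\<Sum>y\<in>V - {x}. if y \<in> N then c - 1 else 1)
        = (\<Sum>y\<in>(V - {x}) \<inter> {y. y \<in> N}. c - 1) + (\<Sum>y\<in>(V - {x}) \<inter> - {y. y \<in> N}. 1)"
      using fin by (intro sum.If_cases) auto
    moreover have "(V - {x}) \<inter> {y. y \<in> N} = N" using NV by auto
    moreover have "(V - {x}) \<inter> - {y. y \<in> N} = (V - {x}) - N" by auto
    ultimately show ?thesis by simp
  qed
  also have "\<dots> = (c - 1) * card N + (card V - 1 - card N)"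
    using card_Diff_subset[OF finN NV] fin x by simp
  finally have h2: "S \<le> (c - 1) * card N + (card V - 1 - card N)" .
  have aN: "card N \<le> card V - 1"
    using card_mono[OF _ NV] fin x by (simp add: card_Diff_singleton)
  show ?thesis unfolding N_def[symmetric]
  proof (rule ccontr)
    assume "\<not> card V + 1 \<le> 2 * card N"
    then have a2: "2 * card N \<le> card V" by simp
    have "c = (c - 2) + 2 \<and> c - 2 \<ge> 1" using c3 by auto
    then obtain d where cd2: "c = d + 2" "d \<ge> 1" by blast
    have "card V \<noteq> 0" using fin x by auto
    then have "1 \<le> card V" by simp
    have "card V = card N + (card V - 1 - card N) + 1" using aN \<open>1 \<le> card V\<close> by simp
    then obtain k where nk: "card V = card N + k + 1" by blast
    have h3: "c * card V \<le> 2 * ((c - 1) * card N + (card V - 1 - card N))" using le_trans[OF h1 mult_le_mono2[OF h2, of 2]] .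
    have "(d + 2) * (card N + k + 1) \<le> 2 * ((d + 1) * card N + k)"
      using h3 unfolding nk cd2 by simp
    moreover have "2 * card N \<le> card N + k + 1" using a2 unfolding nk .
    ultimately show False using arith_aux cd2(2) by blast
  qed
qed

theorem mainTheorem12:
  fixes c :: nat and V :: "'a set" and col :: "'a \<Rightarrow> 'a \<Rightarrow> nat set"
  assumes "c \<ge> 3"
    and "ec_multigraph c V col"
    and "\<forall>u\<in>V. \<forall>v\<in>V. u \<noteq> v \<longrightarrow> card (col u v) \<le> c - 1"
    and "\<forall>x\<in>V. \<forall>i\<in>{1..c}. 2 * col_degree V col i x \<ge> card V"
  shows "has_PC_ham_cycle V col"
proof -
  have fin: "finite V" and symc: "\<And>u v. col u v = col v u" and cuu: "\<And>u. col u u = {}"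
    and sub: "\<And>u v. col u v \<subseteq> {1..c}"
    using assms(2) unfolding ec_multigraph_def by auto
  define E where "E x y \<longleftrightarrow> 2 \<le> card (col x y)" for x y
  have sym: "\<forall>x y. E x y = E y x" using symc unfolding E_def by auto
  have irr: "\<forall>x. \<not> E x x" using cuu unfolding E_def by auto
  have deg: "\<forall>x\<in>V. card V + 1 \<le> 2 * card {y\<in>V. E x y}"
    using deg_H[OF assms] unfolding E_def by blast
  show ?thesis
  proof (cases "V = {}")
    case True
    then have "PC_ham_cycle V col [] []" unfolding PC_ham_cycle_def by simp
    then show ?thesis unfolding has_PC_ham_cycle_def by blast
  next
    case False
    then obtain x where x: "x \<in> V" by blast
    have "{y\<in>V. E x y} \<subseteq> V - {x}" using irr by auto
    then have "card {y\<in>V. E x y} \<le> card V - 1"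
      using card_mono[of "V - {x}"] fin x by (simp add: card_Diff_singleton)
    then have three: "3 \<le> card V" using deg x by fastforce
    obtain xs where xs: "distinct xs" "set xs = V"
      and path: "\<forall>k. Suc k < length xs \<longrightarrow> E (xs!k) (xs!Suc k)"
      using dirac_path[OF sym irr deg fin three] by blast
    define n where "n = length xs"
    have cV: "card V = n" using distinct_card[OF xs(1)] xs(2) n_def by simp
    have n3: "3 \<le> n" using three cV by simp
    have inV: "xs ! j \<in> V" if "j < n" for j using that xs(2) n_def by auto
    have x01: "xs ! 0 \<noteq> xs ! 1" using nth_eq_iff_index_eq[OF xs(1), of 0 1] n3 n_def by force
    have c01: "card (col (xs!0) (xs!1)) \<le> c - 1"
      using assms(3) inV[of 0] inV[of 1] n3 x01 by auto
    obtain \<gamma> where g: "\<gamma> \<in> {1..c}" "\<gamma> \<notin> col (xs!0) (xs!1)"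
    proof (rule ccontr)
      assume "\<not> thesis"
      then have "{1..c} \<subseteq> col (xs!0) (xs!1)" using that by blast
      then have "{1..c} = col (xs!0) (xs!1)" using sub by blast
      then have "card (col (xs!0) (xs!1)) = c" by (metis card_atLeastAtMost diff_Suc_1)
      then show False using c01 assms(1) by simp
    qed
    define G where "G = {i. 1 \<le> i \<and> i + 3 \<le> n \<and> \<gamma> \<in> col (xs!0) (xs!(i+1))}"
    define B where "B = {i. 1 \<le> i \<and> i + 3 \<le> n \<and> E (xs!(n-1)) (xs!i)}"
    have finG: "finite G" unfolding G_def by (rule finite_subset[of _ "{..n}"]) auto
    have finB: "finite B" unfolding B_def by (rule finite_subset[of _ "{..n}"]) auto
    have dg: "n \<le> 2 * card {y\<in>V. \<gamma> \<in> col (xs!0) y}"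
      using assms(4) inV[of 0] n3 g(1) cV unfolding col_degree_def by auto
    have dH: "n + 1 \<le> 2 * card {y\<in>V. E (xs!(n-1)) y}"
      using deg inV[of "n-1"] n3 cV by auto
    have s1: "{y\<in>V. \<gamma> \<in> col (xs!0) y} \<subseteq> insert (xs!(n-1)) ((\<lambda>i. xs!(i+1)) ` G)"
    proof
      fix y assume y: "y \<in> {y\<in>V. \<gamma> \<in> col (xs!0) y}"
      then obtain j where j: "j < n" "y = xs ! j" using xs(2) n_def by (auto simp: in_set_conv_nth)
      have "j \<noteq> 0" proof assume "j = 0" then show False using y j cuu[of "xs!0"] by simp qed
      moreover have "j \<noteq> 1" proof assume "j = 1" then show False using y j g by simp qed
      ultimately have "j = n - 1 \<or> (j - 1 \<in> G \<and> j = (j - 1) + 1)"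
        using j y unfolding G_def by auto
      then show "y \<in> insert (xs!(n-1)) ((\<lambda>i. xs!(i+1)) ` G)"
      proof
        assume "j - 1 \<in> G \<and> j = (j - 1) + 1"
        then have "y = (\<lambda>i. xs!(i+1)) (j - 1)" "j - 1 \<in> G" using j by auto
        then show ?thesis by blast
      qed (use j in auto)
    qed
    have s2: "{y\<in>V. E (xs!(n-1)) y} \<subseteq> insert (xs!0) (insert (xs!(n-2)) ((\<lambda>i. xs!i) ` B))"
    proof
      fix y assume y: "y \<in> {y\<in>V. E (xs!(n-1)) y}"
      then obtain j where j: "j < n" "y = xs ! j" using xs(2) n_def by (auto simp: in_set_conv_nth)
      have "j \<noteq> n - 1" proof assume "j = n - 1" then show False using y j irr by simp qed
      then have "j = 0 \<or> j = n - 2 \<or> j \<in> B" using j y unfolding B_def by auto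
      then show "y \<in> insert (xs!0) (insert (xs!(n-2)) ((\<lambda>i. xs!i) ` B))" using j by auto
    qed
    have cG: "card {y\<in>V. \<gamma> \<in> col (xs!0) y} \<le> card G + 1"
    proof -
      have "card {y\<in>V. \<gamma> \<in> col (xs!0) y} \<le> card (insert (xs!(n-1)) ((\<lambda>i. xs!(i+1)) ` G))"
        using s1 finG by (intro card_mono) auto
      also have "\<dots> \<le> card ((\<lambda>i. xs!(i+1)) ` G) + 1" using finG by (simp add: card_insert_if)
      also have "\<dots> \<le> card G + 1" using card_image_le[OF finG] by simp
      finally show ?thesis .
    qed
    have cB: "card {y\<in>V. E (xs!(n-1)) y} \<le> card B + 2"
    proof -
      have "card {y\<in>V. E (xs!(n-1)) y} \<le> card (insert (xs!0) (insert (xs!(n-2)) ((\<lambda>i. xs!i) ` B)))"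
        using s2 finB by (intro card_mono) auto
      also have "\<dots> \<le> card ((\<lambda>i. xs!i) ` B) + 2" using finB by (simp add: card_insert_if)
      also have "\<dots> \<le> card B + 2" using card_image_le[OF finB] by simp
      finally show ?thesis .
    qed
    have "G \<inter> B \<noteq> {}"
    proof
      assume disj: "G \<inter> B = {}"
      have "G \<union> B \<subseteq> {1..n-3}" unfolding G_def B_def by auto
      then have "card (G \<union> B) \<le> card {1..n-3}" by (intro card_mono) auto
      moreover have "card {1..n-3} + 3 = n" using n3 by simp
      moreover have "card (G \<union> B) = card G + card B" using card_Un_disjoint[OF finG finB disj] .
      ultimately have "card G + card B + 3 \<le> n" by linarith
      then show False using dg dH cG cB by linarith
    qed
    then obtain i where iG: "i \<in> G" and iB: "i \<in> B" by blast
    have i1: "1 \<le> i" and i3: "i + 3 \<le> n" and ig: "\<gamma> \<in> col (xs!0) (xs!(i+1))"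
      and iE: "E (xs!(n-1)) (xs!i)" using iG iB unfolding G_def B_def by auto
    define \<sigma> where "\<sigma> k = (if k = 0 then 0 else if k \<le> n - 1 - i then i + k else n - k)" for k
    define ys where "ys = map (\<lambda>k. xs ! (\<sigma> k)) [0..<n]"
    have \<sigma>lt: "\<sigma> k < n" if "k < n" for k using that n3 i1 unfolding \<sigma>_def by auto
    have lenys: "length ys = n" unfolding ys_def by simp
    have ysn: "ys ! k = xs ! (\<sigma> k)" if "k < n" for k using that unfolding ys_def by simp
    have setys: "set ys = V"
    proof
      show "set ys \<subseteq> V" unfolding ys_def using \<sigma>lt inV by auto
      show "V \<subseteq> set ys"
      proof
        fix y assume "y \<in> V"
        then obtain m where m: "m < n" "y = xs ! m" using xs(2) n_def by (auto simp: in_set_conv_nth)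
        have "\<exists>k<n. \<sigma> k = m"
        proof (cases "m = 0")
          case True then show ?thesis using n3 unfolding \<sigma>_def by (intro exI[of _ 0]) auto
        next
          case False
          show ?thesis
          proof (cases "i + 1 \<le> m")
            case True then show ?thesis using m False i3 unfolding \<sigma>_def
              by (intro exI[of _ "m - i"]) auto
          next
            case F2: False then show ?thesis using m False i3 unfolding \<sigma>_def
              by (intro exI[of _ "n - m"]) auto
          qed
        qed
        then obtain k where "k < n" "\<sigma> k = m" by blast
        then show "y \<in> set ys" using m ysn lenys by (metis nth_mem)
      qed
    qed
    have distys: "distinct ys"
      by (rule card_distinct) (simp add: setys lenys cV)
    define L where "L k = col (ys!k) (ys!((k+1) mod n))" for k
    have Lk: "2 \<le> card (L k)" if k: "1 \<le> k" "k < n" for k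
    proof (cases "k + 1 < n")
      case True
      then have md: "(k + 1) mod n = k + 1" by simp
      have "E (xs ! \<sigma> k) (xs ! \<sigma> (k + 1))"
      proof -
        consider "k + 1 \<le> n - 1 - i" | "k = n - 1 - i" | "n - 1 - i < k" by linarith
        then show ?thesis
        proof cases
          case 1
          then have "\<sigma> k = i + k" "\<sigma> (k+1) = Suc (i + k)" using k unfolding \<sigma>_def by auto
          then show ?thesis using path 1 n_def k by auto
        next
          case 2
          then have "\<sigma> k = n - 1" "\<sigma> (k+1) = i" using k i3 unfolding \<sigma>_def by auto
          then show ?thesis using iE by simp
        next
          case 3
          then have a: "\<sigma> k = Suc (n - k - 1)" "\<sigma> (k+1) = n - k - 1" using k True unfolding \<sigma>_def by auto
          have "E (xs ! (n - k - 1)) (xs ! Suc (n - k - 1))" using path k n_def 3 by auto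
          then show ?thesis using a sym by metis
        qed
      qed
      then show ?thesis unfolding L_def E_def md using ysn k True by simp
    next
      case False
      then have "k = n - 1" using k by simp
      then have "(k + 1) mod n = 0" "\<sigma> k = 1" using n3 i1 unfolding \<sigma>_def by auto
      moreover have "E (xs ! 0) (xs ! Suc 0)" using path n3 n_def by auto
      moreover have "ys ! k = xs ! \<sigma> k" "ys ! 0 = xs ! \<sigma> 0" using ysn k n3 by auto
      moreover have "\<sigma> 0 = 0" unfolding \<sigma>_def by simp
      ultimately have "L k = col (xs ! 0) (xs ! 1)" unfolding L_def using symc by simp
      then show ?thesis using \<open>E (xs ! 0) (xs ! Suc 0)\<close> unfolding E_def by simp
    qed
    have L0: "\<gamma> \<in> L 0"
    proof -
      have "\<sigma> 1 = i + 1" "\<sigma> 0 = 0" using i3 unfolding \<sigma>_def by auto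
      moreover have "1 mod n = 1" using n3 by simp
      ultimately show ?thesis unfolding L_def using ysn[of 0] ysn[of 1] n3 ig by simp
    qed
    have Ln: "\<gamma> \<notin> L (n - 1)"
    proof -
      have "\<sigma> (n - 1) = 1" "\<sigma> 0 = 0" using n3 i1 unfolding \<sigma>_def by auto
      moreover have "(n - 1 + 1) mod n = 0" using n3 by simp
      ultimately show ?thesis unfolding L_def using ysn[of 0] ysn[of "n-1"] n3 g(2) symc by simp
    qed
    obtain f where f: "\<forall>k<n. f k \<in> L k \<and> f k \<noteq> f ((k + 1) mod n)"
      using color_cycle[of n \<gamma> L] n3 L0 Ln Lk by auto
    define fs where "fs = map f [0..<n]"
    have "PC_ham_cycle V col ys fs"
      unfolding PC_ham_cycle_def
    proof (intro conjI allI impI)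
      show "distinct ys" by (rule distys)
      show "set ys = V" by (rule setys)
      show "length fs = length ys" unfolding fs_def lenys by simp
      fix k assume k: "k < length ys"
      then have k': "k < n" using lenys by simp
      have m: "(k + 1) mod n < n" using n3 by simp
      show "fs ! k \<in> col (ys ! k) (ys ! ((k + 1) mod length ys))"
        using f k' unfolding fs_def lenys L_def by simp
      show "fs ! k \<noteq> fs ! ((k + 1) mod length ys)"
        using f k' m unfolding fs_def lenys by simp
    qed
    then show ?thesis unfolding has_PC_ham_cycle_def by blast
  qed
qed

end
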